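(* Let $G$ be a finite simple graph that contains no subgraph isomorphic to $C_n$ for any $n\ge 4$ with $n\not\equiv 0\pmod 4$. Let $u\in V(G)$ and, for $i\ge 1$, let $N_i=\{v\in V(G) : d(u,v)=i\}$. Let $i\ge 1$ and $a,b\in N_i$. If $ab$ is not an edge of any subgraph of $G$ isomorphic to $K_3$, then $ab\notin E(G)$.
   Context: $d(u,v)$ is the shortest-path distance in $G$; $C_n$ is the cycle on $n$ vertices; subgraphs need not be induced. *)

theory Defs
  imports Main "HOL-Library.Extended_Nat"
begin

definition simple_graph :: "'a set \<Rightarrow> ('a \<Rightarrow> 'a \<Rightarrow> bool) \<Rightarrow> bool" where
  "simple_graph V E \<longleftrightarrow> finite V \<and> (\<forall>x y. E x y \<longrightarrow> E y x)
     \<and> (\<forall>x. \<not> E x x) \<and> (\<forall>x y. E x y \<longrightarrow> x \<in> V \<and> y \<in> V)"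

definition is_walk :: "'a set \<Rightarrow> ('a \<Rightarrow> 'a \<Rightarrow> bool) \<Rightarrow> 'a list \<Rightarrow> bool" where
  "is_walk V E xs \<longleftrightarrow> xs \<noteq> [] \<and> set xs \<subseteq> V
     \<and> (\<forall>i. Suc i < length xs \<longrightarrow> E (xs ! i) (xs ! Suc i))"

text \<open>Shortest-path distance (infinity if unreachable).\<close>
definition gdist :: "'a set \<Rightarrow> ('a \<Rightarrow> 'a \<Rightarrow> bool) \<Rightarrow> 'a \<Rightarrow> 'a \<Rightarrow> enat" where
  "gdist V E u v = (INF xs \<in> {xs. is_walk V E xs \<and> hd xs = u \<and> last xs = v}.
                      enat (length xs - 1))"

definition layer :: "'a set \<Rightarrow> ('a \<Rightarrow> 'a \<Rightarrow> bool) \<Rightarrow> 'a \<Rightarrow> nat \<Rightarrow> 'a set" where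
  "layer V E u i = {v \<in> V. gdist V E u v = enat i}"

definition has_cycle_subgraph :: "'a set \<Rightarrow> ('a \<Rightarrow> 'a \<Rightarrow> bool) \<Rightarrow> nat \<Rightarrow> bool" where
  "has_cycle_subgraph V E n \<longleftrightarrow> (\<exists>xs. length xs = n \<and> distinct xs \<and> set xs \<subseteq> V
     \<and> (\<forall>i < n. E (xs ! i) (xs ! ((i + 1) mod n))))"

definition edge_in_triangle :: "'a set \<Rightarrow> ('a \<Rightarrow> 'a \<Rightarrow> bool) \<Rightarrow> 'a \<Rightarrow> 'a \<Rightarrow> bool" where
  "edge_in_triangle V E a b \<longleftrightarrow> (\<exists>x y z. distinct [x, y, z] \<and> {x, y, z} \<subseteq> V
     \<and> E x y \<and> E y z \<and> E x z \<and> a \<noteq> b \<and> a \<in> {x, y, z} \<and> b \<in> {x, y, z})"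

end

theory Submission
  imports Defs
begin

lemma gdist_le:
  assumes "is_walk V E xs" "hd xs = u" "last xs = v"
  shows "gdist V E u v \<le> enat (length xs - 1)"
  unfolding gdist_def by (rule INF_lower) (use assms in auto)

lemma gdist_ex:
  assumes "gdist V E u v = enat n"
  shows "\<exists>xs. is_walk V E xs \<and> hd xs = u \<and> last xs = v \<and> length xs = n + 1"
proof -
  define W where "W = {xs. is_walk V E xs \<and> hd xs = u \<and> last xs = v}"
  define S where "S = (\<lambda>xs. enat (length xs - 1)) ` W"
  have g: "gdist V E u v = Inf S" unfolding gdist_def S_def W_def by (rule refl)
  have ne: "S \<noteq> {}"
  proof
    assume e: "S = {}"
    have "Inf S = \<infinity>" unfolding e Inf_empty by (rule top_enat_def)
    then show False using assms g by simp
  qed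
  then obtain x where x: "x \<in> S" by blast
  have "Inf S = (LEAST y. y \<in> S)" unfolding Inf_enat_def using ne by (rule if_not_P)
  then have "Inf S \<in> S" using LeastI[of "\<lambda>y. y \<in> S", OF x] by simp
  then obtain xs where xs: "xs \<in> W" "enat (length xs - 1) = enat n"
    using assms g unfolding S_def by auto
  then have "xs \<noteq> []" unfolding W_def by (simp add: is_walk_def)
  with xs show ?thesis unfolding W_def by (intro exI[of _ xs]) auto
qed

lemma walk_take:
  assumes "is_walk V E xs" "k < length xs"
  shows "is_walk V E (take (Suc k) xs)"
  using assms unfolding is_walk_def by (auto dest: in_set_takeD)

lemma walk_drop:
  assumes "is_walk V E xs" "k < length xs"
  shows "is_walk V E (drop k xs)"
  using assms unfolding is_walk_def by (auto dest: in_set_dropD)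

lemma walk_append:
  assumes "is_walk V E xs" "is_walk V E ys" "E (last xs) (hd ys)"
  shows "is_walk V E (xs @ ys)"
  unfolding is_walk_def
proof (intro conjI allI impI)
  show "xs @ ys \<noteq> []" using assms by (simp add: is_walk_def)
  show "set (xs @ ys) \<subseteq> V" using assms by (simp add: is_walk_def)
  fix i assume i: "Suc i < length (xs @ ys)"
  have xne: "xs \<noteq> []" and yne: "ys \<noteq> []" using assms by (auto simp: is_walk_def)
  consider "Suc i < length xs" | "Suc i = length xs" | "Suc i > length xs" by linarith
  then show "E ((xs @ ys) ! i) ((xs @ ys) ! Suc i)"
  proof cases
    case 1 then show ?thesis using assms(1) by (auto simp: nth_append is_walk_def)
  next
    case 2
    then have i1: "i < length xs" "(xs @ ys) ! Suc i = hd ys" using yne by (auto simp: nth_append hd_conv_nth)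
    have "xs ! i = last xs" by (metis 2 diff_Suc_1 last_conv_nth xne)
    then show ?thesis using assms(3) i1 by (simp add: nth_append)
  next
    case 3
    then have "Suc (i - length xs) < length ys" using i by auto
    then have "E (ys ! (i - length xs)) (ys ! Suc (i - length xs))" using assms(2) by (auto simp: is_walk_def)
    moreover have "Suc i - length xs = Suc (i - length xs)" using 3 by auto
    ultimately show ?thesis using 3 by (auto simp: nth_append)
  qed
qed

lemma shortest_prefix:
  assumes p: "is_walk V E p" "hd p = u" "last p = a" "length p = i + 1"
    and d: "gdist V E u a = enat i" and k: "k \<le> i"
  shows "gdist V E u (p ! k) = enat k"
proof -
  have pne: "p \<noteq> []" using p by auto
  have hd0: "p ! 0 = u" using p pne by (simp add: hd_conv_nth)
  have kl: "k < length p" using k p by simp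
  have "hd (take (Suc k) p) = u" using hd0 pne by (simp add: hd_conv_nth)
  moreover have "last (take (Suc k) p) = p ! k" using kl by (simp add: take_Suc_conv_app_nth)
  moreover have "length (take (Suc k) p) - 1 = k" using kl by simp
  ultimately have le: "gdist V E u (p ! k) \<le> enat k"
    using gdist_le[OF walk_take[OF p(1) kl]] by metis
  then obtain k' where k': "gdist V E u (p ! k) = enat k'" "k' \<le> k"
    by (cases "gdist V E u (p ! k)") auto
  show ?thesis
  proof (rule ccontr)
    assume "gdist V E u (p ! k) \<noteq> enat k"
    then have lt: "k' < k" using k' by auto
    obtain r where r: "is_walk V E r" "hd r = u" "last r = p ! k" "length r = k' + 1"
      using gdist_ex[OF k'(1)] by blast
    have "gdist V E u a \<le> enat (k' + i - k)"
    proof (cases "k = i")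
      case True
      then show ?thesis using gdist_le[OF r(1-2)] r p pne by (auto simp: last_conv_nth)
    next
      case False
      have w: "is_walk V E (r @ drop (Suc k) p)"
        apply (rule walk_append[OF r(1) walk_drop[OF p(1)]])
        using False k p r(3) pne by (auto simp: is_walk_def hd_drop_conv_nth)
      have "r \<noteq> []" using r by auto
      then have "hd (r @ drop (Suc k) p) = u" using r by simp
      moreover have "last (r @ drop (Suc k) p) = a" using False k p by auto
      ultimately show ?thesis using gdist_le[OF w] r p False k by auto
    qed
    then show False using d lt k by auto
  qed
qed

theorem mainTheorem8:
  fixes V :: "'a set" and E :: "'a \<Rightarrow> 'a \<Rightarrow> bool" and u a b :: 'a and i :: nat
  assumes "simple_graph V E"
    and "\<forall>n. n \<ge> 4 \<and> n mod 4 \<noteq> 0 \<longrightarrow> \<not> has_cycle_subgraph V E n"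
    and "u \<in> V"
    and "i \<ge> 1"
    and "a \<in> layer V E u i" and "b \<in> layer V E u i"
    and "\<not> edge_in_triangle V E a b"
  shows "\<not> E a b"
proof
  assume ab: "E a b"
  have sym: "\<And>x y. E x y \<Longrightarrow> E y x" and irr: "\<And>x. \<not> E x x"
    and inV: "\<And>x y. E x y \<Longrightarrow> x \<in> V \<and> y \<in> V"
    using assms(1) unfolding simple_graph_def by blast+
  have da: "gdist V E u a = enat i" and db: "gdist V E u b = enat i"
    using assms(5,6) by (auto simp: layer_def)
  obtain p where p: "is_walk V E p" "hd p = u" "last p = a" "length p = i + 1"
    using gdist_ex[OF da] by blast
  obtain q where q: "is_walk V E q" "hd q = u" "last q = b" "length q = i + 1"
    using gdist_ex[OF db] by blast
  have pd: "\<And>k. k \<le> i \<Longrightarrow> gdist V E u (p ! k) = enat k"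
    using shortest_prefix[OF p da] by blast
  have qd: "\<And>k. k \<le> i \<Longrightarrow> gdist V E u (q ! k) = enat k"
    using shortest_prefix[OF q db] by blast
  have pq: "\<And>k l. k \<le> i \<Longrightarrow> l \<le> i \<Longrightarrow> p ! k = q ! l \<Longrightarrow> k = l"
  proof -
    fix k l assume kl: "k \<le> i" "l \<le> i" "p ! k = q ! l"
    have "enat k = gdist V E u (p ! k)" using pd[OF kl(1)] by (rule HOL.sym)
    also have "\<dots> = gdist V E u (q ! l)" using kl(3) by (rule arg_cong)
    also have "\<dots> = enat l" using qd[OF kl(2)] .
    finally show "k = l" by simp
  qed
  have pp: "\<And>k l. k \<le> i \<Longrightarrow> l \<le> i \<Longrightarrow> p ! k = p ! l \<Longrightarrow> k = l"
  proof -
    fix k l assume kl: "k \<le> i" "l \<le> i" "p ! k = p ! l"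
    have "enat k = gdist V E u (p ! k)" using pd[OF kl(1)] by (rule HOL.sym)
    also have "\<dots> = gdist V E u (p ! l)" using kl(3) by (rule arg_cong)
    also have "\<dots> = enat l" using pd[OF kl(2)] .
    finally show "k = l" by simp
  qed
  have qq: "\<And>k l. k \<le> i \<Longrightarrow> l \<le> i \<Longrightarrow> q ! k = q ! l \<Longrightarrow> k = l"
  proof -
    fix k l assume kl: "k \<le> i" "l \<le> i" "q ! k = q ! l"
    have "enat k = gdist V E u (q ! k)" using qd[OF kl(1)] by (rule HOL.sym)
    also have "\<dots> = gdist V E u (q ! l)" using kl(3) by (rule arg_cong)
    also have "\<dots> = enat l" using qd[OF kl(2)] .
    finally show "k = l" by simp
  qed
  have pne: "p \<noteq> []" "q \<noteq> []" using p(4) q(4) by auto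
  have p0: "p ! 0 = u" using hd_conv_nth[OF pne(1)] p(2) by simp
  have q0: "q ! 0 = u" using hd_conv_nth[OF pne(2)] q(2) by simp
  have pi: "p ! i = a" using last_conv_nth[OF pne(1)] p(3,4) by simp
  have qi: "q ! i = b" using last_conv_nth[OF pne(2)] q(3,4) by simp
  have ps: "\<And>k. k < i \<Longrightarrow> E (p ! k) (p ! Suc k)" using p by (auto simp: is_walk_def)
  have qs: "\<And>k. k < i \<Longrightarrow> E (q ! k) (q ! Suc k)" using q by (auto simp: is_walk_def)
  have pV: "\<And>k. k \<le> i \<Longrightarrow> p ! k \<in> V" using p by (auto simp: is_walk_def)
  have qV: "\<And>k. k \<le> i \<Longrightarrow> q ! k \<in> V" using q by (auto simp: is_walk_def)
  define J where "J = {k. k \<le> i \<and> p ! k = q ! k}"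
  define j where "j = Max J"
  have fJ: "finite J" unfolding J_def by simp
  have "0 \<in> J" using p0 q0 unfolding J_def by simp
  then have jJ: "j \<in> J" using fJ unfolding j_def using Max_in by blast
  have jmax: "p ! k \<noteq> q ! k" if k: "j < k" "k \<le> i" for k
  proof
    assume "p ! k = q ! k"
    then have "k \<in> J" using k unfolding J_def by simp
    then have "k \<le> j" unfolding j_def using fJ by simp
    then show False using k by simp
  qed
  have jle: "j \<le> i" and pjq: "p ! j = q ! j" using jJ unfolding J_def by auto
  have "j \<noteq> i" using pjq pi qi ab irr by metis
  with jle have ji: "j < i" by simp
  define m where "m = i - j"
  have m1: "m \<ge> 1" using ji unfolding m_def by simp
  show False
  proof (cases "m = 1")
    case True
    then have ij: "i = Suc j" unfolding m_def using ji by simp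
    have e1: "E (p ! j) a" using ps[OF ji] ij pi by simp
    have e2: "E (p ! j) b" using qs[OF ji] ij qi pjq by simp
    have "edge_in_triangle V E a b"
      unfolding edge_in_triangle_def
      apply (rule exI[of _ "p ! j"], rule exI[of _ a], rule exI[of _ b])
    proof -
      have "p ! j \<noteq> a" using e1 irr by metis
      moreover have "p ! j \<noteq> b" using e2 irr by metis
      moreover have "a \<noteq> b" using ab irr by metis
      moreover have "p ! j \<in> V" "a \<in> V" "b \<in> V" using e1 ab inV by blast+
      ultimately show "distinct [p ! j, a, b] \<and> {p ! j, a, b} \<subseteq> V \<and> E (p ! j) a \<and> E a b
        \<and> E (p ! j) b \<and> a \<noteq> b \<and> a \<in> {p ! j, a, b} \<and> b \<in> {p ! j, a, b}"
        using e1 e2 ab by simp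
    qed
    then show False using assms(7) by simp
  next
    case False
    with m1 have m2: "m \<ge> 2" by simp
    define n where "n = 2 * m + 1"
    define f where "f t = (if t \<le> m then p ! (j + t) else q ! (j + 2 * m + 1 - t))" for t
    have im: "i = j + m" unfolding m_def using ji by simp
    have inj: "inj_on f {0..<n}"
    proof (rule inj_onI)
      fix s t assume s: "s \<in> {0..<n}" and t: "t \<in> {0..<n}" and eq: "f s = f t"
      show "s = t"
      proof (cases "s \<le> m")
        case sT: True
        show ?thesis
        proof (cases "t \<le> m")
          case True
          then show ?thesis using sT eq pp[of "j + s" "j + t"] im unfolding f_def by simp
        next
          case False
          then have "p ! (j + s) = q ! (j + 2 * m + 1 - t)" using sT eq unfolding f_def by simp
          then have "j + s = j + 2 * m + 1 - t" using pq sT t False im n_def by simp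
          moreover have "j < j + s" using calculation False t n_def by simp
          ultimately show ?thesis using jmax[of "j + s"] sT im
            \<open>p ! (j + s) = q ! (j + 2 * m + 1 - t)\<close> by simp
        qed
      next
        case sF: False
        show ?thesis
        proof (cases "t \<le> m")
          case tT: True
          then have "p ! (j + t) = q ! (j + 2 * m + 1 - s)" using sF eq unfolding f_def by simp
          then have "j + t = j + 2 * m + 1 - s" using pq tT s sF im n_def by simp
          moreover have "j < j + t" using calculation sF s n_def by simp
          ultimately show ?thesis using jmax[of "j + t"] tT im
            \<open>p ! (j + t) = q ! (j + 2 * m + 1 - s)\<close> by simp
        next
          case False
          then have "q ! (j + 2 * m + 1 - s) = q ! (j + 2 * m + 1 - t)" using sF eq unfolding f_def by simp
          then have "j + 2 * m + 1 - s = j + 2 * m + 1 - t" using qq s t sF False im n_def by simp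
          then show ?thesis using s t n_def by simp
        qed
      qed
    qed
    have fV: "f t \<in> V" if "t < n" for t
      using that pV qV im n_def unfolding f_def by auto
    have fe: "E (f t) (f ((t + 1) mod n))" if t: "t < n" for t
    proof -
      consider "t < m" | "t = m" | "m < t \<and> t < 2 * m" | "t = 2 * m" using t n_def by linarith
      then show ?thesis
      proof cases
        case 1
        then show ?thesis using ps[of "j + t"] im n_def unfolding f_def by simp
      next
        case 2
        then show ?thesis using ab pi qi im n_def m1 unfolding f_def by (simp add: add.commute)
      next
        case 3
        then have "j + 2 * m - t < i" using im by linarith
        then have "E (q ! (j + 2 * m - t)) (q ! Suc (j + 2 * m - t))" using qs by blast
        moreover have "Suc (j + 2 * m - t) = j + 2 * m + 1 - t" using 3 by linarith
        ultimately show ?thesis using 3 sym n_def unfolding f_def by simp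
      next
        case 4
        then have "(t + 1) mod n = 0" using n_def by simp
        then show ?thesis using 4 qs[OF ji] pjq sym m1 unfolding f_def by simp
      qed
    qed
    have "has_cycle_subgraph V E n"
      unfolding has_cycle_subgraph_def
      apply (rule exI[of _ "map f [0..<n]"])
      using inj fV fe by (auto simp: distinct_map)
    moreover have "n \<ge> 4" "n mod 4 \<noteq> 0" using m2 n_def by presburger+
    ultimately show False using assms(2) by blast
  qed
qed

end
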